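(* Let $d$ and $p$ be integers with $d>p\ge 2$ and let \[ f_{d,p}(m)=\sum_{j=1}^{p}\binom{j+m-2}{j-1}\binom{d-j+m}{d-j}. \] Then every integer $k$ with $-\left\lfloor\frac{d-1}{2}\right\rfloor\le k\le -1$ is a root of $f_{d,p}$.
   Context: For an integer $a\ge 0$, $\binom{a+x}{a}$ denotes the polynomial $\prod_{i=1}^{a}(x+i)/a!$ in $x$; so $\binom{j+m-2}{j-1}=\prod_{i=0}^{j-2}(m+i)/(j-1)!$ and $\binom{d-j+m}{d-j}=\prod_{i=1}^{d-j}(m+i)/(d-j)!$. *)

theory Defs
  imports Complex_Main
begin

text \<open>Polynomial binomial (a+x choose a) = prod_{i=1..a}(x+i)/a!, for a nat a and x in a field.\<close>
definition binom_poly :: "nat \<Rightarrow> 'a::field_char_0 \<Rightarrow> 'a" where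
  "binom_poly a x = (\<Prod>i=1..a. x + of_nat i) / of_nat (fact a)"

text \<open>f_{d,p}(m) = sum_{j=1}^p binom(j+m-2, j-1) * binom(d-j+m, d-j).
  Here binom(j+m-2,j-1) is binom_poly (j-1) evaluated at m-1, i.e.
  prod_{i=0}^{j-2}(m+i)/(j-1)!.\<close>
definition f_dp :: "nat \<Rightarrow> nat \<Rightarrow> 'a::field_char_0 \<Rightarrow> 'a" where
  "f_dp d p m = (\<Sum>j=1..p. binom_poly (j - 1) (m - 1) * binom_poly (d - j) m)"

end

theory Submission
  imports Defs
begin

theorem theorem2p7:
  fixes d p :: nat and k :: int
  assumes "2 \<le> p" and "p < d"
    and "- ((int d - 1) div 2) \<le> k" and "k \<le> -1"
  shows "f_dp d p (of_int k :: real) = 0"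
proof -
  define n where "n = nat (-k)"
  have kn: "k = - int n" and n1: "1 \<le> n" using assms(4) by (auto simp: n_def)
  have nd: "2 * n + 1 \<le> d" using assms(3) kn by linarith
  have "binom_poly (j - 1) (real_of_int k - 1) * binom_poly (d - j) (real_of_int k) = 0"
    if j: "j \<in> {1..p}" for j
  proof (cases "j \<le> d - n")
    case True
    have "(\<Prod>i=1..d-j. real_of_int k + of_nat i) = 0"
      using True n1 nd kn by (auto intro!: bexI[where x=n])
    then show ?thesis by (simp add: binom_poly_def)
  next
    case False
    have "(\<Prod>i=1..j-1. (real_of_int k - 1) + of_nat i) = 0"
      using False n1 nd kn by (auto intro!: bexI[where x="n+1"])
    then show ?thesis by (simp add: binom_poly_def)
  qed
  then show ?thesis unfolding f_dp_def by (intro sum.neutral) blast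
qed

end
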